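(* Let $\Pi$ be a finite ground disjunctive logic program (viewed as a set of propositional formulas) that has at least one equilibrium model (answer set), and let $V\subseteq V(\Pi)$. Then there is a finite disjunctive program $\Pi'$ with $V(\Pi')\subseteq V$ such that $\Pi\mathbin{|\!\sim}\psi$ for every $\psi\in\Pi'$, and for every formula $\varphi$ that is a conjunction of literals over $V$, if $\Pi\mathbin{|\!\sim}\varphi$ then $\Pi'\mathbin{|\!\sim}\varphi$.
   Context: A ground disjunctive rule $K_1\lor\dots\lor K_k\leftarrow L_1,\dots,L_m,not\,L_{m+1},\dots,not\,L_n$ (all $K_j,L_i$ atoms) is identified with the propositional formula $L_1\land\dots\land L_m\land\neg L_{m+1}\land\dots\land\neg L_n\to K_1\lor\dots\lor K_k$; a disjunctive program is a finite set of such rules. A literal is an atom $a$ or its negation $\neg a$. $V(\cdot)$ is the set of atoms occurring. Here-and-there logic $\mathbf{HT}(W)$ over atom set $W$: interpretations are pairs $\langle H,T\rangle$, $H\subseteq T\subseteq W$, viewed as two-world Kripke models ($h\le t$; atoms true at $h$: $H$, at $t$: $T$) with intuitionistic Kripke clauses, $\neg\varphi:=\varphi\to\bot$; $\mathcal M\models\varphi$ iff $\varphi$ true at both worlds. An equilibrium model of $\Pi$ over $W$ is a model $\langle T,T\rangle$ of $\Pi$ with no model $\langle H,T\rangle$ of $\Pi$ with $H\subsetneq T$ (for disjunctive programs, $\langle T,T\rangle$ is an equilibrium model iff $T$ is an answer set). Entailment $\mathbin{|\!\sim}$ (closed-world): if $\Pi$ is non-empty and has equilibrium models, $\Pi\mathbin{|\!\sim}\varphi$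 iff every equilibrium model of $\Pi$ over $V(\Pi)\cup V(\varphi)$ satisfies $\varphi$; otherwise $\Pi\mathbin{|\!\sim}\varphi$ iff $\varphi$ holds in every $\mathbf{HT}$-model of $\Pi$. *)

theory Defs
  imports Main
begin

datatype 'a form = Atom 'a | Bot | And "'a form" "'a form" | Or "'a form" "'a form"
  | Imp "'a form" "'a form"

definition Neg :: "'a form \<Rightarrow> 'a form" where "Neg \<phi> = Imp \<phi> Bot"
definition Top :: "'a form" where "Top = Neg Bot"

fun atoms :: "'a form \<Rightarrow> 'a set" where
  "atoms (Atom a) = {a}"
| "atoms Bot = {}"
| "atoms (And \<phi> \<psi>) = atoms \<phi> \<union> atoms \<psi>"
| "atoms (Or \<phi> \<psi>) = atoms \<phi> \<union> atoms \<psi>"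
| "atoms (Imp \<phi> \<psi>) = atoms \<phi> \<union> atoms \<psi>"

definition atoms_set :: "'a form set \<Rightarrow> 'a set" where
  "atoms_set \<Pi> = (\<Union>\<phi>\<in>\<Pi>. atoms \<phi>)"

fun conj_list :: "'a form list \<Rightarrow> 'a form" where
  "conj_list [] = Top"
| "conj_list [\<phi>] = \<phi>"
| "conj_list (\<phi> # \<phi>s) = And \<phi> (conj_list \<phi>s)"

fun disj_list :: "'a form list \<Rightarrow> 'a form" where
  "disj_list [] = Bot"
| "disj_list [\<phi>] = \<phi>"
| "disj_list (\<phi> # \<phi>s) = Or \<phi> (disj_list \<phi>s)"

fun sat_t :: "'a set \<Rightarrow> 'a form \<Rightarrow> bool" where
  "sat_t T (Atom a) = (a \<in> T)"
| "sat_t T Bot = False"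
| "sat_t T (And \<phi> \<psi>) = (sat_t T \<phi> \<and> sat_t T \<psi>)"
| "sat_t T (Or \<phi> \<psi>) = (sat_t T \<phi> \<or> sat_t T \<psi>)"
| "sat_t T (Imp \<phi> \<psi>) = (sat_t T \<phi> \<longrightarrow> sat_t T \<psi>)"

fun sat_h :: "'a set \<Rightarrow> 'a set \<Rightarrow> 'a form \<Rightarrow> bool" where
  "sat_h H T (Atom a) = (a \<in> H)"
| "sat_h H T Bot = False"
| "sat_h H T (And \<phi> \<psi>) = (sat_h H T \<phi> \<and> sat_h H T \<psi>)"
| "sat_h H T (Or \<phi> \<psi>) = (sat_h H T \<phi> \<or> sat_h H T \<psi>)"
| "sat_h H T (Imp \<phi> \<psi>) =
     ((sat_h H T \<phi> \<longrightarrow> sat_h H T \<psi>) \<and> (sat_t T \<phi> \<longrightarrow> sat_t T \<psi>))"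

definition ht_sat :: "'a set \<Rightarrow> 'a set \<Rightarrow> 'a form \<Rightarrow> bool" where
  "ht_sat H T \<phi> = (sat_h H T \<phi> \<and> sat_t T \<phi>)"

definition ht_model :: "'a set \<Rightarrow> 'a set \<Rightarrow> 'a form set \<Rightarrow> bool" where
  "ht_model H T \<Pi> = (\<forall>\<phi>\<in>\<Pi>. ht_sat H T \<phi>)"

text \<open>Equilibrium model \<langle>T,T\<rangle> of \<Pi> over atom set W.\<close>
definition equilibrium_model :: "'a form set \<Rightarrow> 'a set \<Rightarrow> 'a set \<Rightarrow> bool" where
  "equilibrium_model \<Pi> W T =
     (T \<subseteq> W \<and> ht_model T T \<Pi> \<and> \<not> (\<exists>H. H \<subset> T \<and> ht_model H T \<Pi>))"

definition has_equilibrium_model :: "'a form set \<Rightarrow> bool" where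
  "has_equilibrium_model \<Pi> = (\<exists>T. equilibrium_model \<Pi> (atoms_set \<Pi>) T)"

definition entails :: "'a form set \<Rightarrow> 'a form \<Rightarrow> bool" (infix "|~" 50) where
  "\<Pi> |~ \<phi> =
    (if \<Pi> \<noteq> {} \<and> (\<exists>T. equilibrium_model \<Pi> (atoms_set \<Pi> \<union> atoms \<phi>) T)
     then (\<forall>T. equilibrium_model \<Pi> (atoms_set \<Pi> \<union> atoms \<phi>) T \<longrightarrow> ht_sat T T \<phi>)
     else (\<forall>H T. H \<subseteq> T \<longrightarrow> ht_model H T \<Pi> \<longrightarrow> ht_sat H T \<phi>))"

text \<open>Rule K1 v ... v Kk <- L1,...,Lm, not L(m+1), ..., not Ln
  (head, positive body, negative body; all atoms).\<close>
record 'a rule =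
  head :: "'a list"
  pos  :: "'a list"
  negb :: "'a list"

definition rule_form :: "'a rule \<Rightarrow> 'a form" where
  "rule_form r = Imp (conj_list (map Atom (pos r) @ map (\<lambda>a. Neg (Atom a)) (negb r)))
                     (disj_list (map Atom (head r)))"

definition prog_form :: "'a rule set \<Rightarrow> 'a form set" where
  "prog_form P = rule_form ` P"

definition disjunctive_program :: "'a rule set \<Rightarrow> bool" where
  "disjunctive_program P = finite P"

datatype 'a literal = PosL 'a | NegL 'a

fun lit_atom :: "'a literal \<Rightarrow> 'a" where
  "lit_atom (PosL a) = a" | "lit_atom (NegL a) = a"

fun lit_form :: "'a literal \<Rightarrow> 'a form" where
  "lit_form (PosL a) = Atom a" | "lit_form (NegL a) = Neg (Atom a)"

end

theory Submission
  imports Defs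
begin

lemma sat_h_TT: "sat_h T T \<phi> = sat_t T \<phi>"
  by (induction \<phi>) auto

lemma ht_sat_TT: "ht_sat T T \<phi> = sat_t T \<phi>"
  by (simp add: ht_sat_def sat_h_TT)

lemma atoms_Top[simp]: "atoms Top = {}"
  by (simp add: Top_def Neg_def)

lemma sat_t_Top[simp]: "sat_t T Top"
  by (simp add: Top_def Neg_def)

lemma sat_h_Top[simp]: "sat_h H T Top"
  by (simp add: Top_def Neg_def)

lemma atoms_conj_list: "atoms (conj_list xs) = (\<Union>x\<in>set xs. atoms x)"
  by (induction xs rule: conj_list.induct) auto

lemma sat_t_conj_list: "sat_t T (conj_list xs) = (\<forall>x\<in>set xs. sat_t T x)"
  by (induction xs rule: conj_list.induct) auto

lemma atoms_lit[simp]: "atoms (lit_form l) = {lit_atom l}"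
  by (cases l) (auto simp: Neg_def)

lemma sat_t_lit: "sat_t T (lit_form l) = (case l of PosL a \<Rightarrow> a \<in> T | NegL a \<Rightarrow> a \<notin> T)"
  by (cases l) (auto simp: Neg_def)

lemma atoms_conj_lits: "atoms (conj_list (map lit_form ls)) = lit_atom ` set ls"
  by (auto simp: atoms_conj_list)

theorem proposition7:
  fixes P :: "'a rule set" and V :: "'a set"
  assumes "disjunctive_program P"
    and "has_equilibrium_model (prog_form P)"
    and "V \<subseteq> atoms_set (prog_form P)"
  shows "\<exists>P'. disjunctive_program P' \<and> atoms_set (prog_form P') \<subseteq> V
    \<and> (\<forall>\<psi>\<in>prog_form P'. prog_form P |~ \<psi>)
    \<and> (\<forall>ls. ls \<noteq> [] \<longrightarrow> lit_atom ` set ls \<subseteq> V \<longrightarrow>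
          prog_form P |~ conj_list (map lit_form ls) \<longrightarrow>
          prog_form P' |~ conj_list (map lit_form ls))"
proof (cases "P = {}")
  case True
  then have "V = {}" using assms(3) by (simp add: prog_form_def atoms_set_def)
  then show ?thesis
    by (intro exI[of _ "{}"]) (auto simp: disjunctive_program_def prog_form_def atoms_set_def)
next
  case False
  define \<Pi> where "\<Pi> = prog_form P"
  define eqm where "eqm = equilibrium_model \<Pi> (atoms_set \<Pi>)"
  define Cp where "Cp = {a\<in>V. \<forall>T. eqm T \<longrightarrow> a \<in> T}"
  define Cn where "Cn = {a\<in>V. \<forall>T. eqm T \<longrightarrow> a \<notin> T}"
  define P' where "P' = (\<lambda>a. \<lparr>head=[a],pos=[],negb=[]\<rparr>) ` Cp \<union> (\<lambda>a. \<lparr>head=[],pos=[a],negb=[]\<rparr>) ` Cn"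
  have Pi_ne: "\<Pi> \<noteq> {}" using False by (simp add: \<Pi>_def prog_form_def)
  obtain T0 where T0: "eqm T0" using assms(2) by (auto simp: has_equilibrium_model_def eqm_def \<Pi>_def)
  have disj: "Cp \<inter> Cn = {}" using T0 by (auto simp: Cp_def Cn_def)
  have PF: "prog_form P' = (\<lambda>a. Imp Top (Atom a)) ` Cp \<union> (\<lambda>a. Imp (Atom a) Bot) ` Cn"
    by (simp add: P'_def prog_form_def rule_form_def image_Un image_image)
  have finV: "finite V"
  proof -
    have "finite (atoms \<phi>)" for \<phi> :: "'a form" by (induction \<phi>) auto
    then have "finite (atoms_set \<Pi>)" using assms(1)
      by (simp add: atoms_set_def \<Pi>_def prog_form_def disjunctive_program_def)
    then show ?thesis using assms(3) \<Pi>_def finite_subset by blast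
  qed
  have finP': "disjunctive_program P'"
    using finV by (simp add: disjunctive_program_def P'_def Cp_def Cn_def)
  have atP': "atoms_set (prog_form P') = Cp \<union> Cn"
    by (auto simp: PF atoms_set_def)
  have ent: "\<Pi> |~ \<phi> \<longleftrightarrow> (\<forall>T. eqm T \<longrightarrow> sat_t T \<phi>)" if "atoms \<phi> \<subseteq> V" for \<phi>
  proof -
    have W: "atoms_set \<Pi> \<union> atoms \<phi> = atoms_set \<Pi>" using that assms(3) \<Pi>_def by blast
    show ?thesis using Pi_ne T0 unfolding entails_def W eqm_def ht_sat_TT by auto
  qed
  have htm: "ht_model H T (prog_form P') \<longleftrightarrow> Cp \<subseteq> H \<and> Cp \<subseteq> T \<and> (\<forall>a\<in>Cn. a \<notin> H \<and> a \<notin> T)" for H T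
    unfolding PF ht_model_def ht_sat_def ball_Un ball_simps by auto
  show ?thesis
  proof (intro exI[of _ P'] conjI ballI allI impI)
    show "disjunctive_program P'" by (rule finP')
    show "atoms_set (prog_form P') \<subseteq> V" using atP' Cp_def Cn_def by auto
  next
    fix \<psi> assume "\<psi> \<in> prog_form P'"
    then show "prog_form P |~ \<psi>"
      unfolding \<Pi>_def[symmetric] PF
      apply (elim UnE imageE)
      by (subst ent, auto simp: Cp_def Cn_def)+
  next
    fix ls :: "'a literal list"
    assume ne: "ls \<noteq> []" and sub: "lit_atom ` set ls \<subseteq> V"
      and e: "prog_form P |~ conj_list (map lit_form ls)"
    define \<phi> where "\<phi> = conj_list (map lit_form ls)"
    have all: "\<forall>T. eqm T \<longrightarrow> sat_t T \<phi>"
      using e ent[of \<phi>] sub by (simp add: \<Pi>_def \<phi>_def atoms_conj_lits)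
    have lits: "\<forall>l\<in>set ls. case l of PosL a \<Rightarrow> a \<in> Cp | NegL a \<Rightarrow> a \<in> Cn"
    proof
      fix l assume l: "l \<in> set ls"
      have lv: "lit_atom l \<in> V" using sub l by auto
      have ls: "\<forall>T. eqm T \<longrightarrow> sat_t T (lit_form l)"
        using all l by (auto simp: \<phi>_def sat_t_conj_list)
      show "case l of PosL a \<Rightarrow> a \<in> Cp | NegL a \<Rightarrow> a \<in> Cn"
      proof (cases l)
        case (PosL a) then show ?thesis using lv ls by (simp add: Cp_def)
      next
        case (NegL a) then show ?thesis using lv ls by (simp add: Cn_def Neg_def)
      qed
    qed
    obtain l where l: "l \<in> set ls" using ne by (cases ls) auto
    have P'ne: "prog_form P' \<noteq> {}"
    proof (cases l)
      case (PosL a) then have "Imp Top (Atom a) \<in> prog_form P'" using lits l unfolding PF by auto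
      then show ?thesis by blast
    next
      case (NegL a) then have "Imp (Atom a) Bot \<in> prog_form P'" using lits l unfolding PF by auto
      then show ?thesis by blast
    qed
    define W' where "W' = atoms_set (prog_form P') \<union> atoms \<phi>"
    have CpW: "Cp \<subseteq> W'" using atP' W'_def by auto
    have eqCp: "equilibrium_model (prog_form P') W' Cp"
      using CpW disj by (auto simp: equilibrium_model_def htm)
    have only: "T = Cp" if "equilibrium_model (prog_form P') W' T" for T
    proof (rule ccontr)
      assume "T \<noteq> Cp"
      have m: "ht_model T T (prog_form P')" and nm: "\<not> (\<exists>H. H \<subset> T \<and> ht_model H T (prog_form P'))"
        using that by (auto simp: equilibrium_model_def)
      from m have "Cp \<subset> T" "\<forall>a\<in>Cn. a \<notin> T" using \<open>T \<noteq> Cp\<close> by (auto simp: htm)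
      then have "ht_model Cp T (prog_form P')" using disj by (auto simp: htm)
      with nm \<open>Cp \<subset> T\<close> show False by blast
    qed
    have satCp: "sat_t Cp \<phi>"
      unfolding \<phi>_def sat_t_conj_list
    proof (intro ballI)
      fix x assume "x \<in> set (map lit_form ls)"
      then obtain l where l: "l \<in> set ls" "x = lit_form l" by auto
      show "sat_t Cp x"
      proof (cases l)
        case (PosL a) then show ?thesis using lits l by fastforce
      next
        case (NegL a) then have "a \<in> Cn" using lits l by fastforce
        then show ?thesis using disj l NegL by (auto simp: Neg_def)
      qed
    qed
    show "prog_form P' |~ conj_list (map lit_form ls)"
      unfolding \<phi>_def[symmetric] entails_def W'_def[symmetric]
    proof (subst if_P)
      show "prog_form P' \<noteq> {} \<and> (\<exists>T. equilibrium_model (prog_form P') W' T)"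
        using P'ne eqCp by blast
      show "\<forall>T. equilibrium_model (prog_form P') W' T \<longrightarrow> ht_sat T T \<phi>"
        using only satCp by (metis ht_sat_TT)
    qed
  qed
qed

end
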